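(* Let $F(\Sigma)$ be a free group with $\Sigma=A\sqcup B$, and let $b\in\langle B\rangle$ and $z\in F(\Sigma)$ be freely reduced words. Suppose that $z$ begins and ends with letters in $A\sqcup A^{-1}$, that $zb$ is not a proper power, and that there are $i\in\mathbb{Z}$ and $g,h\in F(\Sigma)$ such that $(zb)^i=gzh$ with the word $g\cdot z\cdot h$ freely reduced. Then $i\geq 1$ and $g\in\langle zb\rangle$.
   Context: $F(\Sigma)$ is the free group on $\Sigma$. An element $w$ is a proper power if $w=u^n$ for some $u$ and $n\geq 2$. *)

theory Defs
  imports Main
begin

text \<open>Words in the free group F(Sigma): lists of letters (x, e) with x a generator and
  e = True meaning the inverse letter x^-1.\<close>

type_synonym 'a letter = "'a \<times> bool"
type_synonym 'a word = "'a letter list"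

definition inv_letter :: "'a letter \<Rightarrow> 'a letter" where
  "inv_letter l = (fst l, \<not> snd l)"

definition inv_word :: "'a word \<Rightarrow> 'a word" where
  "inv_word w = rev (map inv_letter w)"

fun freely_reduced :: "'a word \<Rightarrow> bool" where
  "freely_reduced [] = True"
| "freely_reduced [x] = True"
| "freely_reduced (x # y # xs) = (y \<noteq> inv_letter x \<and> freely_reduced (y # xs))"

fun push :: "'a letter \<Rightarrow> 'a word \<Rightarrow> 'a word" where
  "push x [] = [x]"
| "push x (y # ys) = (if y = inv_letter x then ys else x # y # ys)"

fun reduce :: "'a word \<Rightarrow> 'a word" where
  "reduce [] = []"
| "reduce (x # xs) = push x (reduce xs)"

definition fmult :: "'a word \<Rightarrow> 'a word \<Rightarrow> 'a word" where
  "fmult u v = reduce (u @ v)"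

definition fpow :: "'a word \<Rightarrow> int \<Rightarrow> 'a word" where
  "fpow w i = (if 0 \<le> i then reduce (concat (replicate (nat i) w))
               else reduce (concat (replicate (nat (- i)) (inv_word w))))"

definition in_free_group :: "'a set \<Rightarrow> 'a word \<Rightarrow> bool" where
  "in_free_group S w \<longleftrightarrow> freely_reduced w \<and> fst ` set w \<subseteq> S"

inductive in_gen_subgroup :: "'a word set \<Rightarrow> 'a word \<Rightarrow> bool" for X where
  gen_one: "in_gen_subgroup X []"
| gen_base: "x \<in> X \<Longrightarrow> in_gen_subgroup X x"
| gen_inv: "in_gen_subgroup X u \<Longrightarrow> in_gen_subgroup X (inv_word u)"
| gen_mult: "in_gen_subgroup X u \<Longrightarrow> in_gen_subgroup X v \<Longrightarrow> in_gen_subgroup X (fmult u v)"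

definition gens :: "'a set \<Rightarrow> 'a word set" where
  "gens B = {[(x, False)] | x. x \<in> B}"

definition proper_power :: "'a set \<Rightarrow> 'a word \<Rightarrow> bool" where
  "proper_power S w \<longleftrightarrow> (\<exists>u n. in_free_group S u \<and> n \<ge> 2 \<and> w = fpow u (int n))"

end

theory Submission
  imports Defs
begin
lemma inv_letter_inv[simp]: "inv_letter (inv_letter l) = l"
  by (simp add: inv_letter_def)
lemma inv_letter_neq[simp]: "inv_letter l \<noteq> l"
  by (cases l) (simp add: inv_letter_def)
lemma inv_letter_neq'[simp]: "l \<noteq> inv_letter l"
  by (cases l) (simp add: inv_letter_def)
lemma fst_inv_letter[simp]: "fst (inv_letter l) = fst l"
  by (simp add: inv_letter_def)
lemma inv_letter_eq_iff[simp]: "inv_letter a = inv_letter b \<longleftrightarrow> a = b"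
  by (metis inv_letter_inv)

lemma inv_word_Nil[simp]: "inv_word [] = []" by (simp add: inv_word_def)
lemma inv_word_append[simp]: "inv_word (u @ v) = inv_word v @ inv_word u"
  by (simp add: inv_word_def)
lemma inv_word_inv[simp]: "inv_word (inv_word u) = u"
  by (simp add: inv_word_def rev_map comp_def)
lemma length_inv_word[simp]: "length (inv_word u) = length u"
  by (simp add: inv_word_def)
lemma inv_word_Cons: "inv_word (a # u) = inv_word u @ [inv_letter a]"
  by (simp add: inv_word_def)
lemma inv_word_nth: "j < length u \<Longrightarrow> inv_word u ! j = inv_letter (u ! (length u - Suc j))"
  by (simp add: inv_word_def rev_nth)
lemma fst_set_inv_word[simp]: "fst ` set (inv_word u) = fst ` set u"
  by (simp add: inv_word_def image_image)
lemma inv_word_eq_Nil[simp]: "inv_word u = [] \<longleftrightarrow> u = []"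
  by (simp add: inv_word_def)
lemma take_inv_word: "take n (inv_word u) = inv_word (drop (length u - n) u)"
  by (simp add: inv_word_def take_rev drop_map)

lemma fr_nth: "freely_reduced w \<longleftrightarrow> (\<forall>j. Suc j < length w \<longrightarrow> w ! Suc j \<noteq> inv_letter (w ! j))"
proof (induction w rule: freely_reduced.induct)
  case (3 x y xs)
  show ?case
  proof
    assume "freely_reduced (x # y # xs)"
    then show "\<forall>j. Suc j < length (x # y # xs) \<longrightarrow> (x # y # xs) ! Suc j \<noteq> inv_letter ((x # y # xs) ! j)"
      using 3 by (auto simp: nth_Cons split: nat.split)
  next
    assume H: "\<forall>j. Suc j < length (x # y # xs) \<longrightarrow> (x # y # xs) ! Suc j \<noteq> inv_letter ((x # y # xs) ! j)"
    have "y \<noteq> inv_letter x" using H[rule_format, of 0] by simp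
    moreover have "\<forall>j. Suc j < length (y # xs) \<longrightarrow> (y # xs) ! Suc j \<noteq> inv_letter ((y # xs) ! j)"
      using H by (metis Suc_less_eq length_Cons nth_Cons_Suc)
    ultimately show "freely_reduced (x # y # xs)" using 3 by simp
  qed
qed auto

lemma fr_append: "freely_reduced (u @ v) \<longleftrightarrow> freely_reduced u \<and> freely_reduced v \<and>
   (u \<noteq> [] \<longrightarrow> v \<noteq> [] \<longrightarrow> hd v \<noteq> inv_letter (last u))"
proof (induction u rule: freely_reduced.induct)
  case 1 then show ?case by simp
next
  case (2 x) then show ?case by (cases v) auto
next
  case (3 x y xs) then show ?case by auto
qed

lemma fr_take: "freely_reduced w \<Longrightarrow> freely_reduced (take n w)"
  by (metis append_take_drop_id fr_append)
lemma fr_drop: "freely_reduced w \<Longrightarrow> freely_reduced (drop n w)"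
  by (metis append_take_drop_id fr_append)

lemma fr_inv_word: "freely_reduced u \<Longrightarrow> freely_reduced (inv_word u)"
proof (induction u rule: freely_reduced.induct)
  case (3 x y xs)
  then show ?case by (auto simp: inv_word_Cons fr_append)
qed (auto simp: inv_word_def)

lemma fr_inv_word_iff[simp]: "freely_reduced (inv_word u) = freely_reduced u"
  by (metis fr_inv_word inv_word_inv)

lemma inv_word_not_fixed:
  assumes "freely_reduced u" "u \<noteq> []" shows "inv_word u \<noteq> u"
proof
  assume E: "inv_word u = u"
  define n where "n = length u"
  have n0: "n > 0" using assms(2) by (simp add: n_def)
  have K: "\<And>j. j < n \<Longrightarrow> u ! j = inv_letter (u ! (n - Suc j))"
    using E inv_word_nth n_def by metis
  show False
  proof (cases "even n")
    case True
    define j where "j = n div 2 - 1"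
    have "Suc j < n" "n - Suc j = Suc j" "n - Suc (Suc j) = j" using True n0 by (auto simp: j_def)
    then have "u ! Suc j = inv_letter (u ! j)" using K[of "Suc j"] by simp
    then show False using assms(1) \<open>Suc j < n\<close> by (simp add: fr_nth n_def)
  next
    case False
    define j where "j = n div 2"
    have "j < n" "n - Suc j = j" using False n0 by (auto simp: j_def elim!: oddE)
    then show False using K[of j] by simp
  qed
qed

lemma fr_push: "freely_reduced ys \<Longrightarrow> freely_reduced (push x ys)"
  using fr_append[of "[hd ys]" "tl ys"] by (cases ys) (auto simp: fr_append)

lemma fr_reduce: "freely_reduced (reduce w)"
  by (induction w) (auto intro: fr_push)

lemma reduce_id: "freely_reduced w \<Longrightarrow> reduce w = w"
proof (induction w)
  case (Cons x xs)
  have "freely_reduced xs" using Cons.prems fr_append[of "[x]" xs] by simp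
  then have "reduce xs = xs" using Cons.IH by simp
  then show ?case using Cons.prems fr_append[of "[x]" xs] by (cases xs) auto
qed simp

lemma reduce_append: "reduce (u @ v) = reduce (u @ reduce v)"
proof (induction u)
  case Nil then show ?case by (simp add: reduce_id[OF fr_reduce])
qed simp

lemma push_push_inv: "freely_reduced R \<Longrightarrow> push (inv_letter a) (push a R) = R"
proof (cases R)
  case (Cons y ys)
  assume fr: "freely_reduced R"
  show ?thesis
  proof (cases "y = inv_letter a")
    case True
    then have "ys = [] \<or> hd ys \<noteq> a" using fr Cons by (cases ys) auto
    then show ?thesis using Cons True by (cases ys) auto
  qed (use Cons in auto)
qed simp

lemma reduce_cancel0: "reduce (inv_word x @ x @ v) = reduce v"
proof (induction x)
  case (Cons a x)
  have "reduce (inv_word (a # x) @ (a # x) @ v) = reduce (inv_word x @ [inv_letter a, a] @ x @ v)"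
    by (simp add: inv_word_Cons)
  also have "\<dots> = reduce (inv_word x @ reduce ([inv_letter a, a] @ x @ v))"
    using reduce_append by blast
  also have "reduce ([inv_letter a, a] @ x @ v) = reduce (x @ v)"
    by (simp add: push_push_inv fr_reduce)
  also have "reduce (inv_word x @ reduce (x @ v)) = reduce (inv_word x @ x @ v)"
    using reduce_append by metis
  finally show ?case using Cons.IH by simp
qed simp

lemma reduce_cancel: "reduce (u @ inv_word x @ x @ v) = reduce (u @ v)"
  by (metis reduce_append reduce_cancel0)

lemma set_push: "set (push x ys) \<subseteq> insert x (set ys)"
  by (cases ys) auto
lemma set_reduce: "set (reduce w) \<subseteq> set w"
  by (induction w) (use set_push in fastforce)+

definition cyc :: "'a word \<Rightarrow> bool" where
  "cyc c \<longleftrightarrow> c \<noteq> [] \<and> last c \<noteq> inv_letter (hd c)"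

lemma concat_rep_nth: "j < k * length w \<Longrightarrow> concat (replicate k w) ! j = w ! (j mod length w)"
proof (induction k arbitrary: j)
  case (Suc k)
  show ?case
  proof (cases "j < length w")
    case True then show ?thesis by (simp add: nth_append)
  next
    case False
    then have "j - length w < k * length w" using Suc.prems by auto
    then show ?thesis using False Suc.IH[of "j - length w"] by (simp add: nth_append le_mod_geq)
  qed
qed simp

lemma length_concat_rep[simp]: "length (concat (replicate k w)) = k * length w"
  by (induction k) auto

lemma hd_concat_rep: "k \<ge> 1 \<Longrightarrow> c \<noteq> [] \<Longrightarrow> hd (concat (replicate k c)) = hd c"
  by (cases k) auto

lemma fr_concat_rep: "freely_reduced c \<Longrightarrow> cyc c \<Longrightarrow> freely_reduced (concat (replicate k c))"
proof (induction k)
  case (Suc k)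
  show ?case
  proof (cases "k = 0")
    case True then show ?thesis using Suc by simp
  next
    case False
    then have h: "hd (concat (replicate k c)) = hd c" using Suc.prems hd_concat_rep[of k c] by (simp add: cyc_def)
    have f: "freely_reduced (concat (replicate k c))" using Suc by simp
    have "hd c \<noteq> inv_letter (last c)" using Suc.prems(2) unfolding cyc_def by (metis inv_letter_inv)
    then show ?thesis using f h Suc.prems fr_append[of c "concat (replicate k c)"] False
      by (simp add: cyc_def del: concat_replicate_trivial)
  qed
qed simp

lemma last_concat_rep: "k \<ge> 1 \<Longrightarrow> c \<noteq> [] \<Longrightarrow> last (concat (replicate k c)) = last c"
  by (induction k) (auto simp: last_append)

lemma conj_pow_aux:
  "k \<ge> 1 \<Longrightarrow> reduce (concat (replicate k (x @ c @ inv_word x)) @ v) = reduce (x @ concat (replicate k c) @ inv_word x @ v)"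
proof (induction k arbitrary: v rule: dec_induct)
  case base then show ?case by simp
next
  case (step k)
  have "reduce (concat (replicate (Suc k) (x @ c @ inv_word x)) @ v)
      = reduce ((x @ c @ inv_word x) @ (concat (replicate k (x @ c @ inv_word x)) @ v))" by simp
  also have "\<dots> = reduce ((x @ c @ inv_word x) @ reduce (concat (replicate k (x @ c @ inv_word x)) @ v))"
    using reduce_append by blast
  also have "\<dots> = reduce ((x @ c @ inv_word x) @ reduce (x @ concat (replicate k c) @ inv_word x @ v))"
    using step.IH by simp
  also have "\<dots> = reduce ((x @ c) @ inv_word x @ x @ (concat (replicate k c) @ inv_word x @ v))"
    using reduce_append by (metis append.assoc)
  also have "\<dots> = reduce (x @ concat (replicate (Suc k) c) @ inv_word x @ v)"
    using reduce_cancel by (metis append.assoc concat_replicate_trivial replicate_Suc concat.simps(2))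
  finally show ?case .
qed

lemma conj_pow:
  assumes "freely_reduced (x @ c @ inv_word x)" "cyc c" "k \<ge> 1"
  shows "reduce (concat (replicate k (x @ c @ inv_word x))) = x @ concat (replicate k c) @ inv_word x"
    and "freely_reduced (x @ concat (replicate k c) @ inv_word x)"
proof -
  have frc: "freely_reduced c" "freely_reduced x" "freely_reduced (inv_word x)"
    using assms(1) by (auto simp: fr_append)
  have cn: "c \<noteq> []" using assms(2) by (simp add: cyc_def)
  have b1: "x \<noteq> [] \<longrightarrow> hd c \<noteq> inv_letter (last x)" using assms(1) cn by (auto simp: fr_append)
  have b2: "x \<noteq> [] \<longrightarrow> hd (inv_word x) \<noteq> inv_letter (last c)"
    using assms(1) cn by (auto simp: fr_append)
  show F: "freely_reduced (x @ concat (replicate k c) @ inv_word x)"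
    using fr_concat_rep[OF frc(1) assms(2), of k] frc b1 b2 hd_concat_rep[OF assms(3) cn]
      last_concat_rep[OF assms(3) cn] cn assms(3)
    by (auto simp: fr_append)
  show "reduce (concat (replicate k (x @ c @ inv_word x))) = x @ concat (replicate k c) @ inv_word x"
    using conj_pow_aux[OF assms(3), of x c "[]"] reduce_id[OF F] by simp
qed

lemma decomp:
  "freely_reduced z \<Longrightarrow> z \<noteq> [] \<Longrightarrow> \<exists>x c. z = x @ c @ inv_word x \<and> cyc c"
proof (induction "length z" arbitrary: z rule: less_induct)
  case less
  show ?case
  proof (cases "cyc z")
    case True then show ?thesis by (rule_tac x="[]" in exI) simp
  next
    case False
    then have L: "last z = inv_letter (hd z)" using less.prems by (simp add: cyc_def)
    obtain a r where zr: "z = a # r" using less.prems by (cases z) auto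
    have "r \<noteq> []" using L zr by auto
    then obtain m l where rm: "r = m @ [l]" by (metis rev_exhaust)
    have l: "l = inv_letter a" using L zr rm by simp
    have "m \<noteq> []"
      using less.prems(1) zr rm l by (cases m) auto
    moreover have "freely_reduced m" using less.prems(1) zr rm fr_append[of "[a]" "m @ [l]"] fr_append[of m "[l]"] by simp
    ultimately obtain x c where "m = x @ c @ inv_word x" "cyc c"
      using less.hyps[of m] zr rm by auto
    then show ?thesis using zr rm l
      by (rule_tac x="a # x" in exI, rule_tac x=c in exI) (simp add: inv_word_Cons)
  qed
qed

lemma hd_inv_word: "c \<noteq> [] \<Longrightarrow> hd (inv_word c) = inv_letter (last c)"
  by (simp add: inv_word_def hd_rev last_map)
lemma last_inv_word: "c \<noteq> [] \<Longrightarrow> last (inv_word c) = inv_letter (hd c)"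
  by (simp add: inv_word_def last_rev hd_map)
lemma cyc_inv: "cyc c \<Longrightarrow> cyc (inv_word c)"
  unfolding cyc_def by (auto simp: hd_inv_word last_inv_word)

lemma gen_letters: "in_gen_subgroup (gens B) u \<Longrightarrow> fst ` set u \<subseteq> B"
proof (induction rule: in_gen_subgroup.induct)
  case (gen_base x) then show ?case by (auto simp: gens_def)
next
  case (gen_mult u v)
  have "fst ` set (fmult u v) \<subseteq> fst ` (set u \<union> set v)"
    unfolding fmult_def using set_reduce[of "u @ v"] by (simp add: image_mono)
  then show ?case using gen_mult.IH image_Un by blast
qed auto

lemma gen_pow: "freely_reduced w \<Longrightarrow> cyc w \<Longrightarrow> in_gen_subgroup {w} (concat (replicate q w))"
proof (induction q)
  case 0 then show ?case by (simp add: gen_one)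
next
  case (Suc q)
  have "fmult w (concat (replicate q w)) = concat (replicate (Suc q) w)"
    using reduce_id[OF fr_concat_rep[OF Suc.prems, of "Suc q"]] by (simp add: fmult_def)
  then show ?case using gen_mult[OF gen_base[of w "{w}"] Suc.IH[OF Suc.prems]] by simp
qed

lemma key_step:
  assumes eq: "u @ x @ v = v @ y @ u" and ne: "u \<noteq> []" "v \<noteq> []"
    and Pv: "P (hd v)" "P (last v)" and Px: "\<forall>l\<in>set x. \<not> P l"
    and lt: "length u < length v"
  shows "\<exists>v1. v = u @ x @ v1 \<and> v1 \<noteq> [] \<and> P (hd v1) \<and> last v1 = last v \<and> u @ x @ v1 = v1 @ y @ u"
proof -
  have gt: "length u + length x < length v"
  proof (rule ccontr)
    assume nt: "\<not> length u + length x < length v"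
    define j where "j = length v - 1"
    have j1: "length u \<le> j" "j < length u + length x" "j < length v"
      using lt nt ne by (auto simp: j_def)
    have "j - length u < length x" using j1 by linarith
    then have "(u @ x @ v) ! j = x ! (j - length u)" using j1 by (simp add: nth_append)
    moreover have "(v @ y @ u) ! j = last v" using j1 ne by (simp add: nth_append j_def last_conv_nth)
    moreover have "x ! (j - length u) \<in> set x" using j1 by simp
    ultimately show False using eq Pv Px by auto
  qed
  define v1 where "v1 = drop (length u + length x) v"
  have tk: "take (length u + length x) v = u @ x"
  proof -
    have "take (length u + length x) (u @ x @ v) = take (length u + length x) (v @ y @ u)" using eq by simp
    then show ?thesis using gt by simp
  qed
  have vd: "v = u @ x @ v1" using tk by (metis append.assoc append_take_drop_id v1_def)
  have v1ne: "v1 \<noteq> []" using gt by (simp add: v1_def)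
  have "(u @ x @ v) ! (length u + length x) = hd v" using ne by (simp add: nth_append hd_conv_nth)
  moreover have "(v @ y @ u) ! (length u + length x) = hd v1"
    using gt v1ne by (simp add: nth_append hd_conv_nth v1_def)
  ultimately have hv1: "hd v1 = hd v" using eq by simp
  have lv1: "last v1 = last v" using vd v1ne by simp
  have "(u @ x) @ (u @ x @ v1) = (u @ x) @ (v1 @ y @ u)"
    using eq vd by (metis append.assoc)
  then have "u @ x @ v1 = v1 @ y @ u" by (rule same_append_eq[THEN iffD1])
  then show ?thesis using vd v1ne hv1 lv1 Pv by (intro exI[of _ v1]) simp
qed

lemma key:
  assumes "u @ x @ v = v @ y @ u" "u \<noteq> []" "v \<noteq> []"
    "P (hd u)" "P (last u)" "P (hd v)" "P (last v)" "\<forall>l\<in>set x. \<not> P l" "\<forall>l\<in>set y. \<not> P l"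
  shows "x = y"
  using assms
proof (induction "length u + length v" arbitrary: u v x y rule: less_induct)
  case less
  consider "length u = length v" | "length u < length v" | "length v < length u" by linarith
  then show ?case
  proof cases
    case 1
    then have "u = v \<and> x @ v = y @ u" using less.prems(1) append_eq_append_conv[of u v "x @ v" "y @ u"] by blast
    then have "x @ u = y @ u" by metis
    then show ?thesis by simp
  next
    case 2
    then obtain v1 where A: "v = u @ x @ v1" "v1 \<noteq> []" "P (hd v1)" "last v1 = last v" "u @ x @ v1 = v1 @ y @ u"
      using key_step[OF less.prems(1,2,3,6,7,8) 2] by blast
    have L: "length u + length v1 < length u + length v" using A(1) less.prems(2) by simp
    show ?thesis
      by (rule less.hyps[OF L A(5) less.prems(2) A(2) less.prems(4,5) A(3)]) (use A(4) less.prems(7,8,9) in simp_all)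
  next
    case 3
    then obtain u1 where A: "u = v @ y @ u1" "u1 \<noteq> []" "P (hd u1)" "last u1 = last u" "v @ y @ u1 = u1 @ x @ v"
      using key_step[OF less.prems(1)[symmetric] less.prems(3,2,4,5,9) 3] by blast
    have L: "length v + length u1 < length u + length v" using A(1) less.prems(3) by simp
    have "y = x"
      by (rule less.hyps[OF L A(5) less.prems(3) A(2) less.prems(6,7) A(3)]) (use A(4) less.prems(5,8,9) in simp_all)
    then show ?thesis by simp
  qed
qed

lemma casePos:
  fixes z b w g h :: "'a word"
  assumes disj: "A \<inter> B = {}" and zAB: "fst ` set z \<subseteq> A \<union> B" and bB: "fst ` set b \<subseteq> B"
    and zne: "z \<noteq> []" and zh: "fst (hd z) \<in> A" and zl: "fst (last z) \<in> A"
    and wdef: "w = z @ b"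
    and eq: "g @ z @ h = concat (replicate k w)"
  shows "(\<exists>q. g = concat (replicate q w)) \<or> (\<exists>N s. N > 1 \<and> concat (replicate N s) = w)"
proof -
  define n where "n = length w"
  define m where "m = length z"
  define p where "p = length g"
  define r where "r = p mod n"
  have m0: "m > 0" using zne by (simp add: m_def)
  have nm: "n = m + length b" using wdef by (simp add: n_def m_def)
  have wnth: "\<And>j. j < n \<Longrightarrow> w ! j = (if j < m then z ! j else b ! (j - m))"
    using wdef by (simp add: n_def m_def nth_append)
  have wB: "\<And>j. j < n \<Longrightarrow> m \<le> j \<Longrightarrow> fst (w ! j) \<notin> A"
  proof -
    fix j assume "j < n" "m \<le> j"
    then have "b ! (j - m) \<in> set b" using nm by simp
    then show "fst (w ! j) \<notin> A" using wnth \<open>j < n\<close> \<open>m \<le> j\<close> bB disj by auto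
  qed
  have len: "p + m \<le> k * n" using arg_cong[OF eq, of length] by (simp add: p_def m_def n_def)
  have n0: "n > 0" using nm m0 by simp
  have zj: "\<And>j. j < m \<Longrightarrow> z ! j = w ! ((r + j) mod n)"
  proof -
    fix j assume j: "j < m"
    have "z ! j = (g @ z @ h) ! (p + j)" using j by (simp add: p_def m_def nth_append)
    also have "\<dots> = w ! ((p + j) mod n)" using eq concat_rep_nth[of "p + j" k w] len j by (simp add: n_def)
    also have "(p + j) mod n = (r + j) mod n" by (simp add: r_def mod_add_left_eq)
    finally show "z ! j = w ! ((r + j) mod n)" .
  qed
  have rn: "r < n" using n0 by (simp add: r_def)
  have z0: "fst (z ! 0) \<in> A" using zh zne by (simp add: hd_conv_nth)
  have zm: "fst (z ! (m - 1)) \<in> A" using zl zne by (simp add: last_conv_nth m_def)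
  have rm: "r < m"
  proof (rule ccontr)
    assume "\<not> r < m"
    then show False using zj[of 0] z0 wB[of r] rn m0 by simp
  qed
  show ?thesis
  proof (cases "r = 0")
    case True
    define q where "q = p div n"
    have pq: "p = q * n" using True div_mult_mod_eq[of p n] by (simp add: q_def r_def)
    have "g = concat (replicate q w)"
    proof (rule nth_equalityI)
      show "length g = length (concat (replicate q w))" using pq by (simp add: p_def n_def)
    next
      fix j assume j: "j < length g"
      have "g ! j = (g @ z @ h) ! j" using j by (simp add: nth_append)
      also have "\<dots> = w ! (j mod n)" using eq concat_rep_nth[of j k w] len j by (simp add: n_def p_def)
      also have "\<dots> = concat (replicate q w) ! j" using concat_rep_nth[of j q w] j pq by (simp add: n_def p_def)
      finally show "g ! j = concat (replicate q w) ! j" .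
    qed
    then show ?thesis by blast
  next
    case False
    have big: "n < r + m"
    proof (rule ccontr)
      assume "\<not> n < r + m"
      then have "(r + (m - 1)) mod n = r + (m - 1)" using m0 by simp
      moreover have "r + (m - 1) < n" "m \<le> r + (m - 1)" using False m0 \<open>\<not> n < r + m\<close> by auto
      ultimately show False using zj[of "m - 1"] zm wB[of "r + (m - 1)"] m0 by simp
    qed
    define t where "t = r + m - n"
    have t1: "t \<ge> 1" "t \<le> r" "t \<le> m" using big nm rm by (auto simp: t_def)
    have Z: "z = drop r z @ b @ take t z"
    proof (rule nth_equalityI)
      show "length z = length (drop r z @ b @ take t z)" using t1 nm rm big by (simp add: m_def t_def)
    next
      fix j assume j: "j < length z"
      then have jm: "j < m" by (simp add: m_def)
      show "z ! j = (drop r z @ b @ take t z) ! j"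
      proof (cases "j < m - r")
        case True
        then have "(r + j) mod n = r + j" "r + j < m" using nm by auto
        then show ?thesis using zj[OF jm] wnth[of "r + j"] True nm by (simp add: nth_append m_def)
      next
        case F1: False
        show ?thesis
        proof (cases "j < n - r")
          case True
          then have "(r + j) mod n = r + j" "\<not> r + j < m" using F1 by auto
          moreover have "j - (m - r) < length b" "r + j - m = j - (m - r)" using True F1 nm rm by auto
          moreover have "(drop r z @ b @ take t z) ! j = b ! (j - (m - r))"
            using F1 \<open>j - (m - r) < length b\<close> by (simp add: nth_append m_def)
          ultimately show ?thesis using zj[OF jm] wnth[of "r + j"] True nm rm by simp
        next
          case False
          have "n \<le> r + j" "r + j - n < n" using False rn jm nm by auto
          then have "(r + j) mod n = r + j - n" by (simp add: le_mod_geq)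
          moreover have "r + j - n < t" using jm t_def big by linarith
          moreover have "r + j - n < m" using jm rn big t1 t_def by linarith
          moreover have "(drop r z @ b @ take t z) ! j = take t z ! (r + j - n)"
          proof -
            have "\<not> j < length (drop r z)" "\<not> j - length (drop r z) < length b"
              "j - length (drop r z) - length b = r + j - n"
              using F1 False nm rm by (auto simp: m_def)
            then show ?thesis by (simp add: nth_append)
          qed
          ultimately show ?thesis using zj[OF jm] wnth[of "r + j - n"] t1 \<open>r + j - n < n\<close> by simp
        qed
      qed
    qed
    define cnt where "cnt xs = length (filter (\<lambda>l. fst l \<in> A) xs)" for xs :: "'a word"
    have cb: "cnt b = 0" using bB disj unfolding cnt_def by (auto simp: filter_empty_conv)
    have c1: "cnt z = cnt (drop r z) + cnt (take t z)" using arg_cong[OF Z, of cnt] cb by (simp add: cnt_def)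
    have c2: "cnt z = cnt (take r z) + cnt (drop r z)"
      using arg_cong[OF append_take_drop_id[of r z, symmetric], of cnt]
      by (simp only: cnt_def filter_append length_append)
    have tr: "take r z = take t z @ drop t (take r z)" using t1 append_take_drop_id[of t "take r z"] by (simp add: min_def)
    have c3: "cnt (take r z) = cnt (take t z) + cnt (drop t (take r z))"
      using arg_cong[OF tr, of cnt] by (simp only: cnt_def filter_append length_append)
    have c0: "cnt (drop t (take r z)) = 0" using c1 c2 c3 by linarith
    then have u2B: "\<forall>l\<in>set (drop t (take r z)). \<not> fst l \<in> A" unfolding cnt_def by (auto simp: filter_empty_conv)
    have bnA: "\<forall>l\<in>set b. \<not> fst l \<in> A" using bB disj by auto
    have E1: "take t z @ drop t (take r z) @ drop r z = drop r z @ b @ take t z"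
    proof -
      have "take t z @ drop t (take r z) @ drop r z = take r z @ drop r z"
        using tr by (metis append.assoc)
      then show ?thesis using Z by simp
    qed
    have une: "take t z \<noteq> []" using t1 zne by simp
    have vne: "drop r z \<noteq> []" using rm by (simp add: m_def)
    have l1: "last (take t z) = last z" using arg_cong[OF Z, of last] une by simp
    have h1: "hd (drop r z) = hd z" using arg_cong[OF Z, of hd] vne by simp
    have "drop t (take r z) = b"
      using key[OF E1 une vne, of "\<lambda>l. fst l \<in> A"] u2B bnA une vne l1 h1 zh zl
      by (simp add: hd_take)
    then have "(take t z @ b) @ (drop r z @ b) = (drop r z @ b) @ (take t z @ b)"
      using E1 by simp
    then obtain N s where "N > 1" "concat (replicate N s) = (take t z @ b) @ (drop r z @ b)"
      using comm_append_is_replicate[of "take t z @ b" "drop r z @ b"] une vne by auto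
    moreover have "(take t z @ b) @ (drop r z @ b) = w"
      using E1 \<open>drop t (take r z) = b\<close> wdef Z by simp
    ultimately show ?thesis by auto
  qed
qed

lemma caseNeg:
  fixes z b w g h :: "'a word"
  assumes disj: "A \<inter> B = {}" and bB: "fst ` set b \<subseteq> B" and zr: "freely_reduced z"
    and zne: "z \<noteq> []" and zh: "fst (hd z) \<in> A" and zl: "fst (last z) \<in> A"
    and wdef: "w = z @ b"
    and eq: "g @ z @ h = concat (replicate k (inv_word w))"
  shows False
proof -
  define n where "n = length w"
  define m where "m = length z"
  define \<beta> where "\<beta> = length b"
  define p where "p = length g"
  define r where "r = p mod n"
  have m0: "m > 0" using zne by (simp add: m_def)
  have nm: "n = m + \<beta>" using wdef by (simp add: n_def m_def \<beta>_def)
  have w': "inv_word w = inv_word b @ inv_word z" using wdef by simp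
  have wnth: "\<And>j. j < n \<Longrightarrow> inv_word w ! j = (if j < \<beta> then inv_word b ! j else inv_word z ! (j - \<beta>))"
    using w' by (simp add: nth_append \<beta>_def)
  have wB: "\<And>j. j < \<beta> \<Longrightarrow> fst (inv_word w ! j) \<notin> A"
  proof -
    fix j assume j: "j < \<beta>"
    then have "inv_word b ! j \<in> set (inv_word b)" by (simp add: \<beta>_def)
    then have "fst (inv_word b ! j) \<in> B" using bB fst_set_inv_word[of b] by (metis image_eqI subsetD)
    then show "fst (inv_word w ! j) \<notin> A" using wnth[of j] j nm disj by auto
  qed
  have len: "p + m \<le> k * n" using arg_cong[OF eq, of length] by (simp add: p_def m_def n_def)
  have n0: "n > 0" using nm m0 by simp
  have zj: "\<And>j. j < m \<Longrightarrow> z ! j = inv_word w ! ((r + j) mod n)"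
  proof -
    fix j assume j: "j < m"
    have "z ! j = (g @ z @ h) ! (p + j)" using j by (simp add: p_def m_def nth_append)
    also have "\<dots> = inv_word w ! ((p + j) mod n)" using eq concat_rep_nth[of "p + j" k "inv_word w"] len j by (simp add: n_def)
    also have "(p + j) mod n = (r + j) mod n" by (simp add: r_def mod_add_left_eq)
    finally show "z ! j = inv_word w ! ((r + j) mod n)" .
  qed
  have rn: "r < n" using n0 by (simp add: r_def)
  have z0: "fst (z ! 0) \<in> A" using zh zne by (simp add: hd_conv_nth)
  have zm: "fst (z ! (m - 1)) \<in> A" using zl zne by (simp add: last_conv_nth m_def)
  have rb: "\<beta> \<le> r"
  proof (rule ccontr)
    assume "\<not> \<beta> \<le> r"
    then show False using zj[of 0] z0 wB[of r] rn m0 by simp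
  qed
  show False
  proof (cases "r = \<beta>")
    case True
    have "z = inv_word z"
    proof (rule nth_equalityI)
      show "length z = length (inv_word z)" by simp
    next
      fix j assume j: "j < length z"
      then have "(r + j) mod n = \<beta> + j" "\<beta> + j < n" using True nm by (auto simp: m_def)
      then show "z ! j = inv_word z ! j" using zj[of j] wnth[of "\<beta> + j"] j by (simp add: m_def)
    qed
    then show False using inv_word_not_fixed[OF zr zne] by simp
  next
    case False
    have big: "n \<le> r + (m - 1)" using False rb nm m0 by linarith
    have mod1: "(r + (m - 1)) mod n = r + (m - 1) - n" using big rn m0 nm
      by (simp add: le_mod_geq)
    have tb: "\<beta> \<le> r + (m - 1) - n"
    proof (rule ccontr)
      assume "\<not> ?thesis"
      then show False using zj[of "m - 1"] zm wB[of "r + (m - 1) - n"] mod1 m0 by simp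
    qed
    define t where "t = r + m - n - \<beta>"
    have t1: "1 \<le> t" "t \<le> m" using tb rn nm m0 False rb by (auto simp: t_def)
    have D: "drop (m - t) z = take t (inv_word z)"
    proof (rule nth_equalityI)
      show "length (drop (m - t) z) = length (take t (inv_word z))" using t1 by (simp add: m_def)
    next
      fix j assume j: "j < length (drop (m - t) z)"
      then have jt: "j < t" using t1 by (simp add: m_def)
      have e: "r + (m - t + j) = n + (\<beta> + j)" using t1 jt tb rn nm unfolding t_def by linarith
      have "\<beta> + j < n" using jt t1 nm by linarith
      then have "(n + (\<beta> + j)) mod n = \<beta> + j" by simp
      then have "(r + (m - t + j)) mod n = \<beta> + j" using e by metis
      then have "z ! (m - t + j) = inv_word z ! j"
        using zj[of "m - t + j"] wnth[of "\<beta> + j"] jt t1 \<open>\<beta> + j < n\<close> by simp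
      then show "drop (m - t) z ! j = take t (inv_word z) ! j" using jt t1 by (simp add: m_def)
    qed
    also have "\<dots> = inv_word (drop (m - t) z)" by (simp add: take_inv_word m_def)
    finally have "drop (m - t) z = inv_word (drop (m - t) z)" .
    moreover have "drop (m - t) z \<noteq> []" using t1 by (simp add: m_def)
    ultimately show False using inv_word_not_fixed[OF fr_drop[OF zr]] by metis
  qed
qed

lemma caseIV:
  fixes x c d g h :: "'a word"
  assumes fr1: "freely_reduced (x @ c @ inv_word x)" and frD: "freely_reduced (concat (replicate k d))"
    and xne: "x \<noteq> []" and cc: "cyc c" and ld: "length d = length c" and k: "k \<ge> 1"
    and eq: "g @ (x @ c @ inv_word x) @ h = x @ concat (replicate k d) @ inv_word x"
  shows "g = [] \<and> c = d"
proof -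
  define e where "e = length x"
  define l where "l = length c"
  define D where "D = concat (replicate k d)"
  define p where "p = length g"
  have l0: "l > 0" using cc by (simp add: cyc_def l_def)
  have e0: "e > 0" using xne by (simp add: e_def)
  have lenD: "length D = k * l" using ld by (simp add: D_def l_def)
  have len: "p + l \<le> k * l" using arg_cong[OF eq, of length] lenD ld by (simp add: p_def l_def e_def D_def)
  have Wn: "\<And>j. e \<le> j \<Longrightarrow> j < e + k * l \<Longrightarrow> (x @ D @ inv_word x) ! j = D ! (j - e)"
  proof -
    fix j assume "e \<le> j" "j < e + k * l"
    then have "\<not> j < length x" "j - length x < length D" using lenD by (auto simp: e_def)
    then show "(x @ D @ inv_word x) ! j = D ! (j - e)" by (simp add: nth_append e_def)
  qed
  have Dn: "\<And>j. j < k * l \<Longrightarrow> D ! j = d ! (j mod l)"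
    using concat_rep_nth[of _ k d] ld by (simp add: D_def l_def)
  have eqD: "g @ (x @ c @ inv_word x) @ h = x @ D @ inv_word x" using eq by (simp add: D_def)
  have zc: "\<And>j. j < l \<Longrightarrow> D ! (p + j) = c ! j"
  proof -
    fix j assume j: "j < l"
    have "(g @ (x @ c @ inv_word x) @ h) ! (p + e + j) = c ! j" using j
      by (simp add: nth_append p_def e_def l_def)
    moreover have "(x @ D @ inv_word x) ! (p + e + j) = D ! (p + j)" using Wn[of "p + e + j"] j len by simp
    ultimately show "D ! (p + j) = c ! j" using eqD by simp
  qed
  have cd: "p mod l = 0 \<Longrightarrow> c = d"
  proof -
    assume pm: "p mod l = 0"
    show "c = d"
    proof (rule nth_equalityI)
      show "length c = length d" using ld by simp
    next
      fix j assume j: "j < length c"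
      have "(p + j) mod l = (p mod l + j) mod l" by (simp add: mod_add_left_eq)
      then have "(p + j) mod l = j" using pm j by (simp add: l_def)
      then show "c ! j = d ! j" using zc[of j] Dn[of "p + j"] j len by (simp add: l_def)
    qed
  qed
  have pe1: "(g @ (x @ c @ inv_word x) @ h) ! (p + (e - 1)) = last x"
  proof -
    have "(g @ (x @ c @ inv_word x) @ h) ! (p + (e - 1)) = ((x @ c @ inv_word x) @ h) ! (e - 1)"
      by (simp add: p_def nth_append_length_plus)
    also have "\<dots> = x ! (e - 1)" using e0 by (simp add: nth_append e_def)
    finally show ?thesis using xne by (simp add: last_conv_nth e_def)
  qed
  show ?thesis
  proof (cases "p = 0")
    case True then show ?thesis using cd by (simp add: p_def)
  next
    case False
    have Dp1: "D ! (p - 1) = last x"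
      using pe1 eqD Wn[of "p + (e - 1)"] False len l0 e0 by simp
    show ?thesis
    proof (cases "p + l < k * l")
      case True
      have "(g @ (x @ c @ inv_word x) @ h) ! (p + e + l) = inv_letter (last x)"
        using xne by (simp add: nth_append p_def e_def l_def hd_inv_word[symmetric] hd_conv_nth)
      then have "D ! (p + l) = inv_letter (last x)" using eqD Wn[of "p + e + l"] True by simp
      moreover have "D ! (p + l) = D ! p" using Dn[of "p + l"] Dn[of p] True l0 by simp
      ultimately have "D ! Suc (p - 1) = inv_letter (D ! (p - 1))" using Dp1 False by simp
      moreover have "Suc (p - 1) < length D" using True lenD False by simp
      ultimately show ?thesis using frD unfolding fr_nth D_def by blast
    next
      case F2: False
      then have pk: "p = (k - 1) * l" using len by (simp add: diff_mult_distrib)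
      then have "c = d" using cd by simp
      have "(p - 1) mod l = l - 1"
      proof -
        have "k \<ge> 2" using pk False k by (cases k) auto
        then have "p - 1 = (l - 1) + (k - 2) * l" using pk l0
          by (simp add: diff_mult_distrib)
        moreover have "((l - 1) + (k - 2) * l) mod l = (l - 1) mod l" by (rule mod_mult_self1)
        ultimately show ?thesis using l0 by simp
      qed
      then have "last x = last c" using Dp1 Dn[of "p - 1"] \<open>c = d\<close> len False l0 cc
        by (simp add: last_conv_nth l_def cyc_def)
      moreover have "hd (inv_word x) \<noteq> inv_letter (last c)"
        using fr1 xne cc by (simp add: fr_append cyc_def)
      ultimately show ?thesis using xne by (simp add: hd_inv_word)
    qed
  qed
qed

theorem lemma2p2:
  fixes A B :: "'a set" and b z g h :: "'a word" and i :: int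
  assumes disj: "A \<inter> B = {}"
    and b_red: "freely_reduced b" and b_sub: "in_gen_subgroup (gens B) b"
    and z_in: "in_free_group (A \<union> B) z"
    and z_ne: "z \<noteq> []" and z_hd: "fst (hd z) \<in> A" and z_last: "fst (last z) \<in> A"
    and not_pp: "\<not> proper_power (A \<union> B) (fmult z b)"
    and g_in: "in_free_group (A \<union> B) g" and h_in: "in_free_group (A \<union> B) h"
    and eq: "fpow (fmult z b) i = fmult g (fmult z h)"
    and red: "freely_reduced (g @ z @ h)"
  shows "i \<ge> 1 \<and> in_gen_subgroup {fmult z b} g"
proof -
  have bB: "fst ` set b \<subseteq> B" using gen_letters[OF b_sub] .
  have zr: "freely_reduced z" and zAB: "fst ` set z \<subseteq> A \<union> B" using z_in by (auto simp: in_free_group_def)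
  define w where "w = z @ b"
  have hdb: "b \<noteq> [] \<Longrightarrow> fst (hd b) \<in> B" using bB by auto
  have frw: "freely_reduced w"
  proof -
    have "b \<noteq> [] \<longrightarrow> hd b \<noteq> inv_letter (last z)"
    proof (intro impI notI)
      assume "b \<noteq> []" "hd b = inv_letter (last z)"
      then have "fst (hd b) \<in> B" "fst (hd b) \<in> A" using hdb z_last by auto
      then show False using disj by auto
    qed
    then show ?thesis using zr b_red z_ne by (simp add: w_def fr_append)
  qed
  have fzb: "fmult z b = w" using reduce_id[OF frw] by (simp add: fmult_def w_def)
  have W: "fpow w i = g @ z @ h"
  proof -
    have "fmult g (fmult z h) = reduce (g @ z @ h)" unfolding fmult_def using reduce_append[of g "z @ h"] by simp
    then show ?thesis using eq fzb reduce_id[OF red] by simp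
  qed
  have wAB: "fst ` set w \<subseteq> A \<union> B" using zAB bB by (auto simp: w_def)
  have i0: "i \<noteq> 0"
  proof
    assume "i = 0"
    then have "fpow w i = []" by (simp add: fpow_def)
    then show False using W z_ne by simp
  qed
  show ?thesis
  proof (cases "cyc w")
    case cw: True
    show ?thesis
    proof (cases "i > 0")
      case True
      define k where "k = nat i"
      have k1: "k \<ge> 1" using True by (simp add: k_def)
      have "fpow w i = concat (replicate k w)"
        using conj_pow(1)[of "[]" w k] frw cw k1 True by (simp add: fpow_def k_def)
      then have E: "g @ z @ h = concat (replicate k w)" using W by simp
      from casePos[OF disj zAB bB z_ne z_hd z_last w_def E]
      show ?thesis
      proof
        assume "\<exists>q. g = concat (replicate q w)"
        then obtain q where "g = concat (replicate q w)" by blast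
        then show ?thesis using gen_pow[OF frw cw, of q] fzb True by simp
      next
        assume "\<exists>N s. 1 < N \<and> concat (replicate N s) = w"
        then obtain N s where N: "1 < N" "concat (replicate N s) = w" by blast
        have ws: "w = s @ concat (replicate (N - 1) s)" using N by (cases N) auto
        have "freely_reduced s" using fr_take[OF frw, of "length s"] ws by (metis append_eq_conv_conj)
        moreover have "fst ` set s \<subseteq> A \<union> B" using wAB ws by auto
        moreover have "fpow s (int N) = w" using N reduce_id[OF frw] by (simp add: fpow_def)
        ultimately have "proper_power (A \<union> B) w"
          unfolding proper_power_def in_free_group_def using N(1)
          by (intro exI[of _ s] exI[of _ N]) auto
        then show ?thesis using not_pp fzb by simp
      qed
    next
      case False
      define k where "k = nat (- i)"
      have k1: "k \<ge> 1" using False i0 by (simp add: k_def)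
      have "fpow w i = concat (replicate k (inv_word w))"
        using conj_pow(1)[of "[]" "inv_word w" k] frw cyc_inv[OF cw] k1 False by (simp add: fpow_def k_def)
      then have E: "g @ z @ h = concat (replicate k (inv_word w))" using W by simp
      from caseNeg[OF disj bB zr z_ne z_hd z_last w_def E] show ?thesis ..
    qed
  next
    case ncw: False
    have bn: "b = []"
    proof (rule ccontr)
      assume bne: "b \<noteq> []"
      have "fst (last w) \<in> B" using bne bB by (auto simp: w_def)
      moreover have "fst (inv_letter (hd w)) \<in> A" using z_hd z_ne by (simp add: w_def)
      ultimately have "last w \<noteq> inv_letter (hd w)" using disj by auto
      then show False using ncw z_ne by (simp add: cyc_def w_def)
    qed
    then have wz: "w = z" by (simp add: w_def)
    obtain x c where xc: "z = x @ c @ inv_word x" "cyc c" using decomp[OF zr z_ne] by blast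
    have xne: "x \<noteq> []" using xc ncw wz by auto
    have frc: "freely_reduced c" using zr xc(1) by (simp add: fr_append)
    have cne: "c \<noteq> []" using xc(2) by (simp add: cyc_def)
    show ?thesis
    proof (cases "i > 0")
      case True
      define k where "k = nat i"
      have k1: "k \<ge> 1" using True by (simp add: k_def)
      have "fpow w i = x @ concat (replicate k c) @ inv_word x"
        using conj_pow(1)[of x c k] zr xc k1 True wz by (simp add: fpow_def k_def)
      then have E: "g @ (x @ c @ inv_word x) @ h = x @ concat (replicate k c) @ inv_word x"
        using W xc(1) by simp
      have "g = []" using caseIV[OF _ fr_concat_rep[OF frc xc(2)] xne xc(2) _ k1 E] zr xc(1) by simp
      then show ?thesis using True by (simp add: gen_one)
    next
      case False
      define k where "k = nat (- i)"
      have k1: "k \<ge> 1" using False i0 by (simp add: k_def)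
      have iz: "inv_word z = x @ inv_word c @ inv_word x" using xc(1) by simp
      have fiz: "freely_reduced (x @ inv_word c @ inv_word x)" using zr iz fr_inv_word_iff by metis
      have "fpow w i = x @ concat (replicate k (inv_word c)) @ inv_word x"
        using conj_pow(1)[OF fiz cyc_inv[OF xc(2)] k1] iz False wz i0 by (simp add: fpow_def k_def)
      then have E: "g @ (x @ c @ inv_word x) @ h = x @ concat (replicate k (inv_word c)) @ inv_word x"
        using W xc(1) by simp
      have "c = inv_word c"
        using caseIV[OF _ fr_concat_rep[OF _ cyc_inv[OF xc(2)]] xne xc(2) _ k1 E] zr xc(1) frc by simp
      then show ?thesis using inv_word_not_fixed[OF frc cne] by simp
    qed
  qed
qed

end
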